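(* Let $\mathbf{t}\in\mathrm{Sym}^2(\mathbb{R}^3)$ be transversely isotropic and $\mathbf{H}\in\mathbb{H}^4$. Then the pair $(\mathbf{H},\mathbf{t})$ is trigonal, tetragonal or transversely isotropic iff the triple $(\mathbf{d}_2,\mathbf{t},\mathbf{H}:\mathbf{t})$ is transversely isotropic.
   Context: $\mathbb{H}^4$ is the space of totally symmetric traceless fourth-order tensors on $\mathbb{R}^3$, with $SO(3)$-action $(g\star\mathbf{T})(x_1,\dots,x_n)=\mathbf{T}(g^{-1}x_1,\dots,g^{-1}x_n)$. $(\mathbf{H}:\mathbf{H})_{ijkl}=H_{ijmn}H_{mnkl}$, $(\mathbf{H}:\mathbf{a})_{ij}=H_{ijkl}a_{kl}$, $(\operatorname{tr}_{13}\mathbf{A})_{ij}=A_{kikj}$, $\mathbf{d}_2=\operatorname{tr}_{13}(\mathbf{H}:\mathbf{H})$. Symmetry group of a family: intersection of $\{g:g\star\mathbf{T}=\mathbf{T}\}$; class: conjugacy class. Transversely isotropic $=[O(2)]$, tetragonal $=[\mathbb{D}_4]$, trigonal $=[\mathbb{D}_3]$ ($O(2)$: rotations about the $z$-axis and the rotation by $\pi$ about the $x$-axis; $\mathbb{D}_n$ generated by the rotation by $2\pi/n$ about the $z$-axis and the rotation by $\pi$ about the $x$-axis). *)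

theory Defs
  imports "HOL-Analysis.Analysis"
begin

text \<open>Tensors on R^3 in components w.r.t. the standard basis, indices of type 3
  (index 1 = x, 2 = y, 3 = z).\<close>

type_synonym tensor2 = "3 \<Rightarrow> 3 \<Rightarrow> real"
type_synonym tensor4 = "3 \<Rightarrow> 3 \<Rightarrow> 3 \<Rightarrow> 3 \<Rightarrow> real"
type_synonym mat3 = "real^3^3"

definition SO3 :: "mat3 set" where
  "SO3 = {g. orthogonal_matrix g \<and> det g = 1}"

definition act2 :: "mat3 \<Rightarrow> tensor2 \<Rightarrow> tensor2" where
  "act2 g a = (\<lambda>i j. \<Sum>p\<in>UNIV. \<Sum>q\<in>UNIV. g$i$p * g$j$q * a p q)"

definition act4 :: "mat3 \<Rightarrow> tensor4 \<Rightarrow> tensor4" where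
  "act4 g H = (\<lambda>i j k l. \<Sum>p\<in>UNIV. \<Sum>q\<in>UNIV. \<Sum>r\<in>UNIV. \<Sum>s\<in>UNIV.
       g$i$p * g$j$q * g$k$r * g$l$s * H p q r s)"

definition is_Sym2 :: "tensor2 \<Rightarrow> bool" where
  "is_Sym2 a \<longleftrightarrow> (\<forall>i j. a i j = a j i)"

text \<open>Totally symmetric (invariance under the transpositions (12),(23),(34),
  which generate all permutations) and traceless.\<close>
definition is_H4 :: "tensor4 \<Rightarrow> bool" where
  "is_H4 H \<longleftrightarrow>
     (\<forall>i j k l. H i j k l = H j i k l \<and> H i j k l = H i k j l \<and> H i j k l = H i j l k)
     \<and> (\<forall>i j. (\<Sum>k\<in>UNIV. H k k i j) = 0)"

definition ddot44 :: "tensor4 \<Rightarrow> tensor4 \<Rightarrow> tensor4" where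
  "ddot44 H K = (\<lambda>i j k l. \<Sum>m\<in>UNIV. \<Sum>n\<in>UNIV. H i j m n * K m n k l)"

definition ddot42 :: "tensor4 \<Rightarrow> tensor2 \<Rightarrow> tensor2" where
  "ddot42 H a = (\<lambda>i j. \<Sum>k\<in>UNIV. \<Sum>l\<in>UNIV. H i j k l * a k l)"

definition tr13 :: "tensor4 \<Rightarrow> tensor2" where
  "tr13 A = (\<lambda>i j. \<Sum>k\<in>UNIV. A k i k j)"

definition d2 :: "tensor4 \<Rightarrow> tensor2" where
  "d2 H = tr13 (ddot44 H H)"

definition stab2 :: "tensor2 \<Rightarrow> mat3 set" where
  "stab2 a = {g \<in> SO3. act2 g a = a}"

definition stab4 :: "tensor4 \<Rightarrow> mat3 set" where
  "stab4 H = {g \<in> SO3. act4 g H = H}"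

definition rotz :: "real \<Rightarrow> mat3" where
  "rotz th = vector [vector [cos th, - sin th, 0], vector [sin th, cos th, 0], vector [0, 0, 1]]"

definition rotx_pi :: mat3 where
  "rotx_pi = vector [vector [1, 0, 0], vector [0, -1, 0], vector [0, 0, -1]]"

definition O2 :: "mat3 set" where
  "O2 = range rotz \<union> (\<lambda>th. rotz th ** rotx_pi) ` UNIV"

definition Dn :: "nat \<Rightarrow> mat3 set" where
  "Dn n = (\<lambda>k. rotz (2 * pi * real k / real n)) ` {..<n}
        \<union> (\<lambda>k. rotz (2 * pi * real k / real n) ** rotx_pi) ` {..<n}"

definition in_class :: "mat3 set \<Rightarrow> mat3 set \<Rightarrow> bool" where
  "in_class G K \<longleftrightarrow> (\<exists>g\<in>SO3. G = (\<lambda>k. g ** k ** transpose g) ` K)"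

end

theory Submission
  imports Defs
begin


lemma orth_contr:
  assumes "orthogonal_matrix g"
  shows "(\<Sum>m\<in>UNIV. g$m$a * g$m$b) = (if a = b then 1 else (0::real))"
proof -
  have "transpose g ** g = mat 1" using assms by (simp add: orthogonal_matrix_def)
  hence "(transpose g ** g) $ a $ b = mat 1 $ a $ b" by simp
  thus ?thesis by (simp add: matrix_matrix_mult_def transpose_def mat_def)
qed

lemma sw_in: "(\<Sum>x\<in>A. \<Sum>y\<in>B. \<Sum>z\<in>C. f x y z) = (\<Sum>x\<in>A. \<Sum>z\<in>C. \<Sum>y\<in>B. f x y z)"
  by (rule sum.cong[OF refl], rule sum.swap)

lemma sw_in2: "(\<Sum>w\<in>D. \<Sum>x\<in>A. \<Sum>y\<in>B. \<Sum>z\<in>C. f w x y z) = (\<Sum>w\<in>D. \<Sum>x\<in>A. \<Sum>z\<in>C. \<Sum>y\<in>B. f w x y z)"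
  by (rule sum.cong[OF refl], rule sum.cong[OF refl], rule sum.swap)

lemma contr_delta:
  assumes "orthogonal_matrix g"
  shows "(\<Sum>k\<in>UNIV. \<Sum>r\<in>UNIV. \<Sum>a\<in>UNIV. (g$k$r * g$k$a) * z r a) = (\<Sum>r\<in>UNIV. (z r r::real))"
proof -
  have "(\<Sum>k\<in>UNIV. \<Sum>r\<in>UNIV. \<Sum>a\<in>UNIV. (g$k$r * g$k$a) * z r a)
       = (\<Sum>r\<in>UNIV. \<Sum>a\<in>UNIV. (\<Sum>k\<in>UNIV. g$k$r * g$k$a) * z r a)"
    apply (rule sum.swap[THEN trans])
    apply (rule sum.cong[OF refl])
    apply (rule sum.swap[THEN trans])
    apply (simp add: sum_distrib_right)
    done
  also have "\<dots> = (\<Sum>r\<in>UNIV. z r r)"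
    by (simp add: orth_contr[OF assms] if_distrib[of "\<lambda>c. c * _"] sum.delta cong: if_cong)
  finally show ?thesis .
qed

lemma frob1:
  assumes "orthogonal_matrix g"
  shows "(\<Sum>k\<in>UNIV. (\<Sum>r\<in>UNIV. g$k$r * x r) * (\<Sum>a\<in>UNIV. g$k$a * y a)) = (\<Sum>r\<in>UNIV. x r * (y r::real))"
proof -
  have "(\<Sum>k\<in>UNIV. (\<Sum>r\<in>UNIV. g$k$r * x r) * (\<Sum>a\<in>UNIV. g$k$a * y a))
      = (\<Sum>k\<in>UNIV. \<Sum>r\<in>UNIV. \<Sum>a\<in>UNIV. (g$k$r * g$k$a) * (x r * y a))"
    by (simp add: sum_product mult_ac)
  also have "\<dots> = (\<Sum>r\<in>UNIV. x r * y r)"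
    by (rule contr_delta[OF assms])
  finally show ?thesis .
qed

lemma frob2:
  assumes "orthogonal_matrix g"
  shows "(\<Sum>k\<in>UNIV. \<Sum>l\<in>UNIV. (\<Sum>r\<in>UNIV. g$k$r * (\<Sum>s\<in>UNIV. g$l$s * X r s)) * (\<Sum>a\<in>UNIV. g$k$a * (\<Sum>b\<in>UNIV. g$l$b * Y a b)))
       = (\<Sum>r\<in>UNIV. \<Sum>s\<in>UNIV. X r s * (Y r s::real))"
  apply (rule sum.swap[THEN trans])
  apply (simp only: frob1[OF assms])
  apply (rule sum.swap[THEN trans])
  apply (simp only: frob1[OF assms])
  done

lemma frob3:
  assumes "orthogonal_matrix g"
  shows "(\<Sum>k\<in>UNIV. \<Sum>m\<in>UNIV. \<Sum>n\<in>UNIV. 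
      (\<Sum>a\<in>UNIV. g$k$a * (\<Sum>c\<in>UNIV. g$m$c * (\<Sum>d\<in>UNIV. g$n$d * X a c d))) *
      (\<Sum>a\<in>UNIV. g$k$a * (\<Sum>c\<in>UNIV. g$m$c * (\<Sum>d\<in>UNIV. g$n$d * Y a c d))))
       = (\<Sum>a\<in>UNIV. \<Sum>c\<in>UNIV. \<Sum>d\<in>UNIV. X a c d * (Y a c d::real))"
  apply (rule sum.swap[THEN trans])
  apply (subst sw_in)
  apply (simp only: frob1[OF assms])
  apply (subst sw_in)
  apply (rule sum.swap[THEN trans])
  apply (simp only: frob2[OF assms])
  done



lemma act4_1234: "act4 g H i j k l = (\<Sum>p\<in>UNIV. g$i$p * (\<Sum>q\<in>UNIV. g$j$q * (\<Sum>r\<in>UNIV. g$k$r * (\<Sum>s\<in>UNIV. g$l$s * H p q r s))))"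
  by (simp add: act4_def sum_distrib_left mult.assoc)

lemma act2_12: "act2 g a i j = (\<Sum>p\<in>UNIV. g$i$p * (\<Sum>q\<in>UNIV. g$j$q * a p q))"
  by (simp add: act2_def sum_distrib_left mult.assoc)

lemma act4_3412: "act4 g H i j k l = (\<Sum>r\<in>UNIV. g$k$r * (\<Sum>s\<in>UNIV. g$l$s * (\<Sum>p\<in>UNIV. g$i$p * (\<Sum>q\<in>UNIV. g$j$q * H p q r s))))"
  by (simp add: act4_def sum_3 algebra_simps)

lemma act4_1342: "act4 g H i j k l = (\<Sum>a\<in>UNIV. g$i$a * (\<Sum>c\<in>UNIV. g$k$c * (\<Sum>d\<in>UNIV. g$l$d * (\<Sum>b\<in>UNIV. g$j$b * H a b c d))))"
  by (simp add: act4_def sum_3 algebra_simps)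

lemma act4_3124: "act4 g H i j k l = (\<Sum>a\<in>UNIV. g$k$a * (\<Sum>c\<in>UNIV. g$i$c * (\<Sum>d\<in>UNIV. g$j$d * (\<Sum>q\<in>UNIV. g$l$q * H c d a q))))"
  by (simp add: act4_def sum_3 algebra_simps)

lemma t5: fixes H :: tensor4 and g :: mat3 shows "(\<Sum>a\<in>UNIV. \<Sum>c\<in>UNIV. \<Sum>d\<in>UNIV. (\<Sum>b\<in>UNIV. g$i$b * H a b c d) * (\<Sum>q\<in>UNIV. g$j$q * H c d a q))
   = (\<Sum>b\<in>UNIV. g$i$b * (\<Sum>q\<in>UNIV. g$j$q * (\<Sum>a\<in>UNIV. \<Sum>c\<in>UNIV. \<Sum>d\<in>UNIV. H a b c d * (H c d a q::real))))"
  by (simp add: sum_3 algebra_simps)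

lemma d2_equiv:
  assumes "orthogonal_matrix g"
  shows "d2 (act4 g H) = act2 g (d2 H)"
proof (rule ext, rule ext)
  fix i j
  have "d2 (act4 g H) i j = (\<Sum>k\<in>UNIV. \<Sum>m\<in>UNIV. \<Sum>n\<in>UNIV. 
      (\<Sum>a\<in>UNIV. g$k$a * (\<Sum>c\<in>UNIV. g$m$c * (\<Sum>d\<in>UNIV. g$n$d * (\<Sum>b\<in>UNIV. g$i$b * H a b c d)))) *
      (\<Sum>a\<in>UNIV. g$k$a * (\<Sum>c\<in>UNIV. g$m$c * (\<Sum>d\<in>UNIV. g$n$d * (\<Sum>q\<in>UNIV. g$j$q * H c d a q)))))"
    unfolding d2_def tr13_def ddot44_def
    apply (intro sum.cong refl)
    apply (rule arg_cong2[where f=times])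
     apply (rule act4_1342)
    apply (rule act4_3124)
    done
  also have "\<dots> = (\<Sum>a\<in>UNIV. \<Sum>c\<in>UNIV. \<Sum>d\<in>UNIV. (\<Sum>b\<in>UNIV. g$i$b * H a b c d) * (\<Sum>q\<in>UNIV. g$j$q * H c d a q))"
    by (rule frob3[OF assms])
  also have "\<dots> = act2 g (d2 H) i j"
    unfolding t5 act2_12 d2_def tr13_def ddot44_def ..
  finally show "d2 (act4 g H) i j = act2 g (d2 H) i j" .
qed

lemma t4: fixes H :: tensor4 and g :: mat3 shows "(\<Sum>r\<in>UNIV. \<Sum>s\<in>UNIV. (\<Sum>p\<in>UNIV. g$i$p * (\<Sum>q\<in>UNIV. g$j$q * H p q r s)) * t r s)
   = (\<Sum>p\<in>UNIV. g$i$p * (\<Sum>q\<in>UNIV. g$j$q * (\<Sum>r\<in>UNIV. \<Sum>s\<in>UNIV. H p q r s * t r s)))"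
  by (simp add: sum_3 algebra_simps)

lemma ddot42_equiv:
  assumes "orthogonal_matrix g"
  shows "ddot42 (act4 g H) (act2 g t) = act2 g (ddot42 H t)"
proof (rule ext, rule ext)
  fix i j
  have "ddot42 (act4 g H) (act2 g t) i j = (\<Sum>k\<in>UNIV. \<Sum>l\<in>UNIV. 
     (\<Sum>r\<in>UNIV. g$k$r * (\<Sum>s\<in>UNIV. g$l$s * (\<Sum>p\<in>UNIV. g$i$p * (\<Sum>q\<in>UNIV. g$j$q * H p q r s)))) *
     (\<Sum>a\<in>UNIV. g$k$a * (\<Sum>b\<in>UNIV. g$l$b * t a b)))"
    unfolding ddot42_def act4_3412 act2_12 ..
  also have "\<dots> = (\<Sum>r\<in>UNIV. \<Sum>s\<in>UNIV. (\<Sum>p\<in>UNIV. g$i$p * (\<Sum>q\<in>UNIV. g$j$q * H p q r s)) * t r s)"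
    by (rule frob2[OF assms])
  also have "\<dots> = act2 g (ddot42 H t) i j"
    unfolding t4 act2_12 ddot42_def ..
  finally show "ddot42 (act4 g H) (act2 g t) i j = act2 g (ddot42 H t) i j" .
qed



definition sl1 :: "mat3 \<Rightarrow> tensor4 \<Rightarrow> tensor4" where "sl1 g X = (\<lambda>i j k l. \<Sum>p\<in>UNIV. g$i$p * X p j k l)"
definition sl2 :: "mat3 \<Rightarrow> tensor4 \<Rightarrow> tensor4" where "sl2 g X = (\<lambda>i j k l. \<Sum>p\<in>UNIV. g$j$p * X i p k l)"
definition sl3 :: "mat3 \<Rightarrow> tensor4 \<Rightarrow> tensor4" where "sl3 g X = (\<lambda>i j k l. \<Sum>p\<in>UNIV. g$k$p * X i j p l)"
definition sl4 :: "mat3 \<Rightarrow> tensor4 \<Rightarrow> tensor4" where "sl4 g X = (\<lambda>i j k l. \<Sum>p\<in>UNIV. g$l$p * X i j k p)"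

lemma act4_sl: "act4 g X = sl1 g (sl2 g (sl3 g (sl4 g X)))"
  by (simp add: fun_eq_iff act4_1234 sl1_def sl2_def sl3_def sl4_def)

lemma sl_mult: "sl1 (g ** h) X = sl1 g (sl1 h X)" "sl2 (g ** h) X = sl2 g (sl2 h X)"
  "sl3 (g ** h) X = sl3 g (sl3 h X)" "sl4 (g ** h) X = sl4 g (sl4 h X)"
  by (simp_all add: sl1_def sl2_def sl3_def sl4_def matrix_matrix_mult_def sum_3 algebra_simps)

lemma sl_comm:
  "sl1 h (sl2 g X) = sl2 g (sl1 h X)" "sl1 h (sl3 g X) = sl3 g (sl1 h X)" "sl1 h (sl4 g X) = sl4 g (sl1 h X)"
  "sl2 h (sl1 g X) = sl1 g (sl2 h X)" "sl2 h (sl3 g X) = sl3 g (sl2 h X)" "sl2 h (sl4 g X) = sl4 g (sl2 h X)"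
  "sl3 h (sl1 g X) = sl1 g (sl3 h X)" "sl3 h (sl2 g X) = sl2 g (sl3 h X)" "sl3 h (sl4 g X) = sl4 g (sl3 h X)"
  "sl4 h (sl1 g X) = sl1 g (sl4 h X)" "sl4 h (sl2 g X) = sl2 g (sl4 h X)" "sl4 h (sl3 g X) = sl3 g (sl4 h X)"
  by (simp_all add: sl1_def sl2_def sl3_def sl4_def sum_3 algebra_simps)

lemma act4_mult: "act4 (g ** h) X = act4 g (act4 h X)"
  unfolding act4_sl sl_mult
  by (simp only: sl_comm(1-12)[of h g])

lemma sl_id: "sl1 (mat 1) X = X" "sl2 (mat 1) X = X" "sl3 (mat 1) X = X" "sl4 (mat 1) X = X"
  by (simp_all add: sl1_def sl2_def sl3_def sl4_def mat_def sum_3 fun_eq_iff forall_3)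

lemma act4_id: "act4 (mat 1) X = X"
  by (simp add: act4_sl sl_id)

lemma act2_mult: "act2 (g ** h) a = act2 g (act2 h a)"
  by (simp add: act2_def matrix_matrix_mult_def sum_3 algebra_simps fun_eq_iff)

lemma act2_id: "act2 (mat 1) a = a"
  by (simp add: act2_def mat_def sum_3 fun_eq_iff forall_3)

lemma H4_equiv:
  assumes g: "orthogonal_matrix g" and H: "is_H4 H"
  shows "is_H4 (act4 g H)"
proof -
  have s12: "\<And>i j k l. H i j k l = H j i k l" and s23: "\<And>i j k l. H i j k l = H i k j l"
    and s34: "\<And>i j k l. H i j k l = H i j l k" and tr: "\<And>i j. (\<Sum>k\<in>UNIV. H k k i j) = 0"
    using H unfolding is_H4_def by blast+
  have sym: "\<forall>i j k l. act4 g H i j k l = act4 g H j i k l \<and> act4 g H i j k l = act4 g H i k j l \<and> act4 g H i j k l = act4 g H i j l k"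
    by (simp add: act4_def sum_3 algebra_simps s12 s23 s34) 
  have "(\<Sum>k\<in>UNIV. act4 g H k k i j) = 0" for i j
  proof -
    have "(\<Sum>k\<in>UNIV. act4 g H k k i j) = (\<Sum>k\<in>UNIV. \<Sum>p\<in>UNIV. \<Sum>q\<in>UNIV. (g$k$p * g$k$q) * (\<Sum>r\<in>UNIV. g$i$r * (\<Sum>s\<in>UNIV. g$j$s * H p q r s)))"
      by (simp add: act4_1234 sum_distrib_left mult.assoc)
    also have "\<dots> = (\<Sum>p\<in>UNIV. (\<Sum>r\<in>UNIV. g$i$r * (\<Sum>s\<in>UNIV. g$j$s * H p p r s)))"
      by (rule contr_delta[OF g])
    also have "\<dots> = (\<Sum>r\<in>UNIV. g$i$r * (\<Sum>s\<in>UNIV. g$j$s * (\<Sum>p\<in>UNIV. H p p r s)))"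
      by (simp add: sum_3 algebra_simps)
    also have "\<dots> = 0" by (simp add: tr)
    finally show ?thesis .
  qed
  with sym show ?thesis unfolding is_H4_def by blast
qed


abbreviation cnj :: "mat3 \<Rightarrow> mat3 \<Rightarrow> mat3" where "cnj g k \<equiv> g ** k ** transpose g"
lemma SO3_orth: "g \<in> SO3 \<Longrightarrow> orthogonal_matrix g" by (simp add: SO3_def)
lemma SO3_T: "g \<in> SO3 \<Longrightarrow> transpose g \<in> SO3" by (simp add: SO3_def)
lemma SO3_mult: "g \<in> SO3 \<Longrightarrow> h \<in> SO3 \<Longrightarrow> g ** h \<in> SO3"
  unfolding SO3_def using orthogonal_matrix_mul det_mul by (metis (mono_tags, lifting) mem_Collect_eq mult_1)
lemma SO3_id: "mat 1 \<in> SO3" by (simp add: SO3_def orthogonal_matrix_id)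
lemma orth_TL: "orthogonal_matrix g \<Longrightarrow> transpose g ** g = mat 1" by (simp add: orthogonal_matrix_def)
lemma orth_TR: "orthogonal_matrix g \<Longrightarrow> g ** transpose g = mat 1" by (simp add: orthogonal_matrix_def)
lemma conj_comp: "cnj g (cnj h k) = cnj (g ** h) k"
  by (simp only: matrix_mul_assoc matrix_transpose_mul)
lemma conj_inv: "g \<in> SO3 \<Longrightarrow> cnj (transpose g) (cnj g k) = k"
  using conj_comp[of "transpose g" g k]
  by (simp only: orth_TL SO3_orth transpose_mat matrix_mul_lid matrix_mul_rid)
lemma conj_inv': "g \<in> SO3 \<Longrightarrow> cnj g (cnj (transpose g) k) = k"
  using conj_comp[of g "transpose g" k]
  by (simp only: orth_TR SO3_orth transpose_mat matrix_mul_lid matrix_mul_rid)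

lemma inj_conj: assumes "g \<in> SO3" shows "inj (cnj g)"
proof (rule injI)
  fix x y assume "cnj g x = cnj g y"
  hence "cnj (transpose g) (cnj g x) = cnj (transpose g) (cnj g y)" by (rule arg_cong)
  thus "x = y" by (simp only: conj_inv[OF assms])
qed

lemma conj_SO3: "g \<in> SO3 \<Longrightarrow> k \<in> SO3 \<Longrightarrow> cnj g k \<in> SO3"
  by (intro SO3_mult SO3_T)

lemma act2_conj: "act2 (cnj g k) (act2 g a) = act2 g (act2 k (act2 (transpose g ** g) a))"
  by (simp only: act2_mult)
lemma act4_conj: "act4 (cnj g k) (act4 g a) = act4 g (act4 k (act4 (transpose g ** g) a))"
  by (simp only: act4_mult)

lemma stab2_conj:
  assumes g: "g \<in> SO3"
  shows "stab2 (act2 g a) = cnj g ` stab2 a"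
proof
  have gg: "transpose g ** g = mat 1" by (rule orth_TL[OF SO3_orth[OF g]])
  show "cnj g ` stab2 a \<subseteq> stab2 (act2 g a)"
  proof
    fix k' assume "k' \<in> cnj g ` stab2 a"
    then obtain k where k: "k \<in> stab2 a" "k' = cnj g k" by blast
    have "act2 k' (act2 g a) = act2 g a" 
      unfolding k(2) act2_conj gg act2_id using k(1) by (simp add: stab2_def)
    moreover have "k' \<in> SO3" using k g conj_SO3 by (simp add: stab2_def)
    ultimately show "k' \<in> stab2 (act2 g a)" by (simp add: stab2_def)
  qed
  show "stab2 (act2 g a) \<subseteq> cnj g ` stab2 a"
  proof
    fix k' assume k': "k' \<in> stab2 (act2 g a)"
    define k where "k = cnj (transpose g) k'"
    have "act2 k a = act2 (transpose g) (act2 k' (act2 g a))"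
      unfolding k_def by (simp only: act2_mult transpose_transpose)
    also have "\<dots> = act2 (transpose g) (act2 g a)" using k' by (simp add: stab2_def)
    also have "\<dots> = a" by (simp only: act2_mult[symmetric] gg act2_id)
    moreover have "k \<in> SO3" unfolding k_def using k' g by (intro SO3_mult SO3_T) (simp_all add: stab2_def)
    ultimately have "k \<in> stab2 a" by (simp add: stab2_def)
    moreover have "k' = cnj g k" using g by (simp only: k_def conj_inv')
    ultimately show "k' \<in> cnj g ` stab2 a" by blast
  qed
qed

lemma stab4_conj:
  assumes g: "g \<in> SO3"
  shows "stab4 (act4 g a) = cnj g ` stab4 a"
proof
  have gg: "transpose g ** g = mat 1" by (rule orth_TL[OF SO3_orth[OF g]])
  show "cnj g ` stab4 a \<subseteq> stab4 (act4 g a)"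
  proof
    fix k' assume "k' \<in> cnj g ` stab4 a"
    then obtain k where k: "k \<in> stab4 a" "k' = cnj g k" by blast
    have "act4 k' (act4 g a) = act4 g a" 
      unfolding k(2) act4_conj gg act4_id using k(1) by (simp add: stab4_def)
    moreover have "k' \<in> SO3" using k g conj_SO3 by (simp add: stab4_def)
    ultimately show "k' \<in> stab4 (act4 g a)" by (simp add: stab4_def)
  qed
  show "stab4 (act4 g a) \<subseteq> cnj g ` stab4 a"
  proof
    fix k' assume k': "k' \<in> stab4 (act4 g a)"
    define k where "k = cnj (transpose g) k'"
    have "act4 k a = act4 (transpose g) (act4 k' (act4 g a))"
      unfolding k_def by (simp only: act4_mult transpose_transpose)
    also have "\<dots> = act4 (transpose g) (act4 g a)" using k' by (simp add: stab4_def)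
    also have "\<dots> = a" by (simp only: act4_mult[symmetric] gg act4_id)
    moreover have "k \<in> SO3" unfolding k_def using k' g by (intro SO3_mult SO3_T) (simp_all add: stab4_def)
    ultimately have "k \<in> stab4 a" by (simp add: stab4_def)
    moreover have "k' = cnj g k" using g by (simp only: k_def conj_inv')
    ultimately show "k' \<in> cnj g ` stab4 a" by blast
  qed
qed

lemma in_class_conj:
  assumes g: "g \<in> SO3"
  shows "in_class (cnj g ` G) K \<longleftrightarrow> in_class G K"
proof
  assume "in_class (cnj g ` G) K"
  then obtain h where h: "h \<in> SO3" "cnj g ` G = cnj h ` K" by (auto simp: in_class_def)
  have "G = cnj (transpose g) ` cnj g ` G" using g by (simp only: image_comp o_def conj_inv image_ident)
  also have "\<dots> = cnj (transpose g ** h) ` K" using h by (simp only: image_comp o_def conj_comp)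
  finally show "in_class G K" unfolding in_class_def using g h SO3_mult SO3_T by blast
next
  assume "in_class G K"
  then obtain h where h: "h \<in> SO3" "G = cnj h ` K" by (auto simp: in_class_def)
  hence "cnj g ` G = cnj (g ** h) ` K" by (simp only: image_comp o_def conj_comp)
  thus "in_class (cnj g ` G) K" unfolding in_class_def using g h SO3_mult by blast
qed



definition cnt :: "3 \<Rightarrow> 3 \<Rightarrow> 3 \<Rightarrow> 3 \<Rightarrow> 3 \<Rightarrow> nat" where
  "cnt x i j k l = of_bool (i = x) + of_bool (j = x) + of_bool (k = x) + of_bool (l = x)"

definition red :: "real \<Rightarrow> real \<Rightarrow> real \<Rightarrow> real \<Rightarrow> real \<Rightarrow> tensor4" where
  "red A e q u v i j k l = (let n2 = cnt 2 i j k l; n3 = cnt 3 i j k l in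
     if n3 = 0 then (if n2 = 0 then A else if n2 = 1 then q else if n2 = 2 then -A-e else if n2 = 3 then -q else A)
     else if n3 = 1 then (if n2 = 0 then u else if n2 = 1 then v else if n2 = 2 then -u else -v)
     else if n3 = 2 then (if n2 = 0 then e else if n2 = 1 then 0 else e)
     else if n3 = 3 then 0 else -2*e)"

lemma all81: "(\<forall>i j k l. P i j k l) \<longleftrightarrow> (\<forall>j k l. P 1 j k l \<and> P 2 j k l \<and> P (3::3) j k l)"
  by (metis exhaust_3)

lemma red_H4: "is_H4 (red A e q u v)"
  unfolding is_H4_def
  by (simp add: all_comm[where P="\<lambda>i j. _"] forall_3 sum_3 red_def cnt_def)

lemma sym_eq:
  assumes X: "is_H4 X" and Y: "is_H4 Y"
   and "X 1 1 1 1 = Y 1 1 1 1" "X 1 1 1 2 = Y 1 1 1 2" "X 1 1 1 3 = Y 1 1 1 3" "X 1 1 2 2 = Y 1 1 2 2"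
   "X 1 1 2 3 = Y 1 1 2 3" "X 1 1 3 3 = Y 1 1 3 3" "X 1 2 2 2 = Y 1 2 2 2" "X 1 2 2 3 = Y 1 2 2 3"
   "X 1 2 3 3 = Y 1 2 3 3" "X 1 3 3 3 = Y 1 3 3 3" "X 2 2 2 2 = Y 2 2 2 2" "X 2 2 2 3 = Y 2 2 2 3"
   "X 2 2 3 3 = Y 2 2 3 3" "X 2 3 3 3 = Y 2 3 3 3" "X 3 3 3 3 = Y 3 3 3 3"
  shows "X = Y"
proof -
  have x12: "\<And>i j k l. X i j k l = X j i k l" and x23: "\<And>i j k l. X i j k l = X i k j l"
    and x34: "\<And>i j k l. X i j k l = X i j l k" using X unfolding is_H4_def by blast+
  have y12: "\<And>i j k l. Y i j k l = Y j i k l" and y23: "\<And>i j k l. Y i j k l = Y i k j l"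
    and y34: "\<And>i j k l. Y i j k l = Y i j l k" using Y unfolding is_H4_def by blast+
  have "\<forall>i j k l. X i j k l = Y i j k l"
    unfolding all81 forall_3 using assms(3-) by (simp add: x12 x23 x34 y12 y23 y34)
  thus ?thesis by (simp add: fun_eq_iff)
qed


lemma sin3: "sin (3 * (x::real)) = 3 * sin x - 4 * sin x ^ 3"
proof -
  have "sin (3 * x) = sin (2 * x + x)" by simp
  also have "\<dots> = 3 * sin x - 4 * sin x ^ 3"
    unfolding sin_add sin_double cos_double
    using sin_cos_squared_add[of x] by algebra
  finally show ?thesis .
qed

lemma cos3: "cos (3 * (x::real)) = 4 * cos x ^ 3 - 3 * cos x"
  by (rule cos_treble_cos)

lemma cos4: "cos (4 * (x::real)) = 8 * cos x ^ 4 - 8 * cos x ^ 2 + 1"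
proof -
  have "cos (4 * x) = cos (2 * (2 * x))" by simp
  also have "\<dots> = 8 * cos x ^ 4 - 8 * cos x ^ 2 + 1"
    unfolding cos_double sin_double
    using sin_cos_squared_add[of x] by algebra
  finally show ?thesis .
qed

lemma sin4: "sin (4 * (x::real)) = 4 * sin x * cos x * (2 * cos x ^ 2 - 1)"
proof -
  have "sin (4 * x) = sin (2 * (2 * x))" by simp
  also have "\<dots> = 4 * sin x * cos x * (2 * cos x ^ 2 - 1)"
    unfolding cos_double sin_double
    using sin_cos_squared_add[of x] by algebra
  finally show ?thesis .
qed

lemma rotz_SO3: "rotz th \<in> SO3"
proof -
  have "orthogonal_matrix (rotz th)"
    unfolding orthogonal_matrix_def
    using sin_cos_squared_add3[of th]
    by (simp add: matrix_matrix_mult_def transpose_def mat_def vec_eq_iff forall_3 sum_3 rotz_def algebra_simps)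
  moreover have "det (rotz th) = 1"
    by (simp add: det_3 rotz_def)
  ultimately show ?thesis by (simp add: SO3_def)
qed

lemma rotx_SO3: "rotx_pi \<in> SO3"
proof -
  have "orthogonal_matrix rotx_pi"
    unfolding orthogonal_matrix_def
    by (simp add: matrix_matrix_mult_def transpose_def mat_def vec_eq_iff forall_3 sum_3 rotx_pi_def)
  moreover have "det rotx_pi = 1"
    by (simp add: det_3 rotx_pi_def)
  ultimately show ?thesis by (simp add: SO3_def)
qed

lemma O2_SO3: "O2 \<subseteq> SO3"
  unfolding O2_def using rotz_SO3 rotx_SO3 SO3_mult by blast

lemma ROT:
  "act4 (rotz th) (red A e q u v) =
    red ((cos (4*th) * (4*A+3*e) - 4 * sin (4*th) * q - 3*e)/4) e ((sin (4*th) * (4*A+3*e) + 4 * cos (4*th) * q)/4)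
        (cos (3*th) * u - sin (3*th) * v) (sin (3*th) * u + cos (3*th) * v)"
  apply (rule sym_eq)
  apply (rule H4_equiv[OF SO3_orth[OF rotz_SO3] red_H4])
  apply (rule red_H4)
  apply (simp_all add: act4_def sum_3 rotz_def red_def cnt_def sin3 cos3 sin4 cos4)
  using sin_cos_squared_add[of th] by algebra+



lemma FLIP: "act4 rotx_pi (red A e q u v) = red A e (-q) (-u) v"
  apply (rule sym_eq)
  apply (rule H4_equiv[OF SO3_orth[OF rotx_SO3] red_H4])
  apply (rule red_H4)
  apply (simp_all add: act4_def sum_3 rotx_pi_def red_def cnt_def)
  done

lemma red_inj: "red A e q u v = red A' e' q' u' v' \<Longrightarrow> A = A' \<and> e = e' \<and> q = q' \<and> u = u' \<and> v = v'"
proof -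
  assume h: "red A e q u v = red A' e' q' u' v'"
  have "red A e q u v 1 1 1 1 = red A' e' q' u' v' 1 1 1 1" "red A e q u v 1 1 3 3 = red A' e' q' u' v' 1 1 3 3"
    "red A e q u v 1 1 1 2 = red A' e' q' u' v' 1 1 1 2" "red A e q u v 1 1 1 3 = red A' e' q' u' v' 1 1 1 3"
    "red A e q u v 1 1 2 3 = red A' e' q' u' v' 1 1 2 3" using h by simp_all
  thus ?thesis by (simp add: red_def cnt_def)
qed

lemma rotz_eq: "cos a = cos b \<Longrightarrow> sin a = sin b \<Longrightarrow> rotz a = rotz b"
  by (simp add: rotz_def)

lemma rotz_add: "rotz a ** rotz b = rotz (a + b)"
  by (simp add: rotz_def matrix_matrix_mult_def vec_eq_iff forall_3 sum_3 cos_add sin_add algebra_simps)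

lemma rotz_T: "transpose (rotz a) = rotz (- a)"
  by (simp add: rotz_def transpose_def vec_eq_iff forall_3)

lemma rotx_rotz: "rotx_pi ** rotz b = rotz (- b) ** rotx_pi"
  by (simp add: rotz_def rotx_pi_def matrix_matrix_mult_def vec_eq_iff forall_3 sum_3)

lemma rotz_0: "rotz 0 = mat 1"
  by (simp add: rotz_def mat_def vec_eq_iff forall_3)

lemma conj_rotz: "cnj (rotz a) (rotz b) = rotz b"
  by (simp add: rotz_add rotz_T)

lemma conj_rotz_fl: "cnj (rotz a) (rotz b ** rotx_pi) = rotz (b + 2 * a) ** rotx_pi"
proof -
  have "cnj (rotz a) (rotz b ** rotx_pi) = rotz a ** rotz b ** (rotx_pi ** rotz (- a))"
    by (simp add: rotz_T matrix_mul_assoc)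
  also have "\<dots> = rotz (b + 2 * a) ** rotx_pi"
    by (simp add: rotx_rotz matrix_mul_assoc rotz_add add_ac)
  finally show ?thesis .
qed

lemma conj_rotz_O2: "cnj (rotz a) ` O2 = O2"
proof
  show "cnj (rotz a) ` O2 \<subseteq> O2"
    unfolding O2_def by (auto simp: conj_rotz conj_rotz_fl)
  show "O2 \<subseteq> cnj (rotz a) ` O2"
  proof
    fix x assume "x \<in> O2"
    then consider th where "x = rotz th" | th where "x = rotz th ** rotx_pi" unfolding O2_def by blast
    thus "x \<in> cnj (rotz a) ` O2"
    proof cases
      case 1 thus ?thesis unfolding O2_def using conj_rotz by (metis UNIV_I UnI1 image_eqI)
    next
      case 2
      have "x = cnj (rotz a) (rotz (th - 2 * a) ** rotx_pi)" using 2 by (simp add: conj_rotz_fl)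
      thus ?thesis unfolding O2_def by blast
    qed
  qed
qed

lemma in_class_refl: "in_class G G"
  unfolding in_class_def
  by (rule bexI[OF _ SO3_id]) (simp add: transpose_mat)

lemma NORM: "in_class (stab4 (act4 (rotz a) X) \<inter> O2) K \<longleftrightarrow> in_class (stab4 X \<inter> O2) K"
proof -
  have "stab4 (act4 (rotz a) X) \<inter> O2 = cnj (rotz a) ` (stab4 X \<inter> O2)"
    using stab4_conj[OF rotz_SO3, of a X] conj_rotz_O2[of a] inj_conj[OF rotz_SO3, of a]
    by (simp add: image_Int)
  thus ?thesis by (simp add: in_class_conj[OF rotz_SO3])
qed

lemma stab_char:
  assumes fx: "act4 rotx_pi X = X" and rz: "\<And>th. act4 (rotz th) X = X \<longleftrightarrow> Q th"
  shows "stab4 X \<inter> O2 = rotz ` {th. Q th} \<union> (\<lambda>th. rotz th ** rotx_pi) ` {th. Q th}"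
proof -
  have fl: "act4 (rotz th ** rotx_pi) X = act4 (rotz th) X" for th by (simp add: act4_mult fx)
  show ?thesis
  proof
    show "stab4 X \<inter> O2 \<subseteq> rotz ` {th. Q th} \<union> (\<lambda>th. rotz th ** rotx_pi) ` {th. Q th}"
      unfolding O2_def stab4_def using rz fl by auto
    show "rotz ` {th. Q th} \<union> (\<lambda>th. rotz th ** rotx_pi) ` {th. Q th} \<subseteq> stab4 X \<inter> O2"
      unfolding O2_def stab4_def using rz fl rotz_SO3 rotx_SO3 SO3_mult by auto
  qed
qed

lemma O2_char: "O2 = rotz ` {th. True} \<union> (\<lambda>th. rotz th ** rotx_pi) ` {th. True}"
  unfolding O2_def by simp

lemma rot_per: "cos (real n * th) = 1 \<Longrightarrow> n > 0 \<Longrightarrow> \<exists>k<n. rotz th = rotz (2 * pi * real k / real n)"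
proof -
  assume c: "cos (real n * th) = 1" and n: "n > 0"
  obtain m :: int where m: "real n * th = real_of_int m * 2 * pi" using c unfolding cos_one_2pi_int by blast
  define k where "k = nat (m mod int n)"
  define d where "d = m div int n"
  have kn: "k < n" unfolding k_def using n by (simp add: nat_less_iff)
  have "m = d * int n + int k" unfolding k_def d_def using n by simp
  hence "real n * th = (real_of_int d * real n + real k) * 2 * pi" using m by (metis of_int_add of_int_mult of_int_of_nat_eq)
  hence "th = 2 * pi * real k / real n + 2 * pi * real_of_int d" using n by (simp add: field_simps)
  hence "rotz th = rotz (2 * pi * real k / real n)"
    by (intro rotz_eq) (metis sin_cos_eq_iff)+
  thus ?thesis using kn by blast
qed

lemma Dn_char:
  assumes n: "n > 0"
  shows "Dn n = rotz ` {th. cos (real n * th) = 1} \<union> (\<lambda>th. rotz th ** rotx_pi) ` {th. cos (real n * th) = 1}"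
proof -
  have c: "cos (real n * (2 * pi * real k / real n)) = 1" for k
  proof -
    have "real n * (2 * pi * real k / real n) = 2 * pi * real_of_int (int k)" using n by simp
    thus ?thesis by (metis cos_int_2pin)
  qed
  have A: "(\<lambda>k. rotz (2 * pi * real k / real n)) ` {..<n} = rotz ` {th. cos (real n * th) = 1}"
  proof
    show "(\<lambda>k. rotz (2 * pi * real k / real n)) ` {..<n} \<subseteq> rotz ` {th. cos (real n * th) = 1}"
      using c by blast
    show "rotz ` {th. cos (real n * th) = 1} \<subseteq> (\<lambda>k. rotz (2 * pi * real k / real n)) ` {..<n}"
      using rot_per[OF _ n] by blast
  qed
  have B: "(\<lambda>k. rotz (2 * pi * real k / real n) ** rotx_pi) ` {..<n} = (\<lambda>th. rotz th ** rotx_pi) ` {th. cos (real n * th) = 1}"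
  proof
    show "(\<lambda>k. rotz (2 * pi * real k / real n) ** rotx_pi) ` {..<n} \<subseteq> (\<lambda>th. rotz th ** rotx_pi) ` {th. cos (real n * th) = 1}"
      using c by blast
    show "(\<lambda>th. rotz th ** rotx_pi) ` {th. cos (real n * th) = 1} \<subseteq> (\<lambda>k. rotz (2 * pi * real k / real n) ** rotx_pi) ` {..<n}"
    proof
      fix x assume "x \<in> (\<lambda>th. rotz th ** rotx_pi) ` {th. cos (real n * th) = 1}"
      then obtain th where x: "x = rotz th ** rotx_pi" "cos (real n * th) = 1" by blast
      then obtain k where "k < n" "rotz th = rotz (2 * pi * real k / real n)" using rot_per[OF _ n] by blast
      thus "x \<in> (\<lambda>k. rotz (2 * pi * real k / real n) ** rotx_pi) ` {..<n}" using x by auto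
    qed
  qed
  show ?thesis unfolding Dn_def A B ..
qed



definition LHSP :: "tensor4 \<Rightarrow> bool" where
  "LHSP X \<longleftrightarrow> in_class (stab4 X \<inter> O2) (Dn 3) \<or> in_class (stab4 X \<inter> O2) (Dn 4) \<or> in_class (stab4 X \<inter> O2) O2"

lemma LHSP_norm: "LHSP (act4 (rotz a) X) \<longleftrightarrow> LHSP X"
  unfolding LHSP_def NORM ..

lemma case_O2:
  assumes "4*A + 3*e = 0"
  shows "LHSP (red A e 0 0 0)"
proof -
  have "stab4 (red A e 0 0 0) \<inter> O2 = rotz ` {th. True} \<union> (\<lambda>th. rotz th ** rotx_pi) ` {th. True}"
  proof (rule stab_char)
    show "act4 rotx_pi (red A e 0 0 0) = red A e 0 0 0" by (simp add: FLIP)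
    show "act4 (rotz th) (red A e 0 0 0) = red A e 0 0 0 \<longleftrightarrow> True" for th
      using assms by (simp add: ROT) (rule arg_cong[where f="\<lambda>x. red x _ _ _ _"], simp)
  qed
  thus ?thesis unfolding LHSP_def O2_char[symmetric] by (simp add: in_class_refl)
qed

lemma case_D4:
  assumes P: "4*A + 3*e \<noteq> 0"
  shows "LHSP (red A e 0 0 0)"
proof -
  have "stab4 (red A e 0 0 0) \<inter> O2 = rotz ` {th. cos (real 4 * th) = 1} \<union> (\<lambda>th. rotz th ** rotx_pi) ` {th. cos (real 4 * th) = 1}"
  proof (rule stab_char)
    show "act4 rotx_pi (red A e 0 0 0) = red A e 0 0 0" by (simp add: FLIP)
    show "act4 (rotz th) (red A e 0 0 0) = red A e 0 0 0 \<longleftrightarrow> cos (real 4 * th) = 1" for th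
    proof
      assume "act4 (rotz th) (red A e 0 0 0) = red A e 0 0 0"
      hence "(cos (4*th) * (4*A+3*e) - 3*e)/4 = A" unfolding ROT using red_inj by fastforce
      hence "cos (4*th) * (4*A+3*e) = 1 * (4*A+3*e)" by (simp add: field_simps)
      thus "cos (real 4 * th) = 1" using P by (metis mult_right_cancel of_nat_numeral)
    next
      assume c: "cos (real 4 * th) = 1"
      hence c4: "cos (4 * th) = 1" by simp
      hence s4: "sin (4 * th) = 0" using sin_cos_squared_add[of "4*th"] by simp
      show "act4 (rotz th) (red A e 0 0 0) = red A e 0 0 0"
        unfolding ROT c4 s4 by simp
    qed
  qed
  hence "stab4 (red A e 0 0 0) \<inter> O2 = Dn 4" using Dn_char[of 4] by simp
  thus ?thesis unfolding LHSP_def by (simp add: in_class_refl)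
qed

lemma case_D3:
  assumes P: "4*A + 3*e = 0" and v: "v \<noteq> 0"
  shows "LHSP (red A e 0 0 v)"
proof -
  have "stab4 (red A e 0 0 v) \<inter> O2 = rotz ` {th. cos (real 3 * th) = 1} \<union> (\<lambda>th. rotz th ** rotx_pi) ` {th. cos (real 3 * th) = 1}"
  proof (rule stab_char)
    show "act4 rotx_pi (red A e 0 0 v) = red A e 0 0 v" by (simp add: FLIP)
    show "act4 (rotz th) (red A e 0 0 v) = red A e 0 0 v \<longleftrightarrow> cos (real 3 * th) = 1" for th
    proof
      assume "act4 (rotz th) (red A e 0 0 v) = red A e 0 0 v"
      hence "cos (3*th) * v = 1 * v" unfolding ROT using red_inj by fastforce
      thus "cos (real 3 * th) = 1" using v by (metis mult_right_cancel of_nat_numeral)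
    next
      assume c: "cos (real 3 * th) = 1"
      hence c3: "cos (3 * th) = 1" by simp
      hence s3: "sin (3 * th) = 0" using sin_cos_squared_add[of "3*th"] by simp
      have A: "A = - 3 * e / 4" using P by simp
      show "act4 (rotz th) (red A e 0 0 v) = red A e 0 0 v"
        unfolding ROT c3 s3 A by simp
    qed
  qed
  hence "stab4 (red A e 0 0 v) \<inter> O2 = Dn 3" using Dn_char[of 3] by simp
  thus ?thesis unfolding LHSP_def by (simp add: in_class_refl)
qed



lemma LHS_red:
  assumes h: "(u = 0 \<and> v = 0) \<or> (4*A + 3*e = 0 \<and> q = 0)"
  shows "LHSP (red A e q u v)"
proof (cases "u = 0 \<and> v = 0")
  case True
  hence uv: "u = 0" "v = 0" by auto
  show ?thesis
  proof (cases "4*A + 3*e = 0 \<and> q = 0")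
    case True thus ?thesis using uv case_O2 by auto
  next
    case False
    define P where "P = 4*A + 3*e"
    define r where "r = sqrt (P^2 + 16 * q^2)"
    have "P \<noteq> 0 \<or> q \<noteq> 0" using False unfolding P_def by auto
    hence "P^2 > 0 \<or> q^2 > 0" by auto
    moreover have "P^2 \<ge> 0" "q^2 \<ge> 0" by auto
    ultimately have pos: "P^2 + 16 * q^2 > 0" by linarith
    have r: "r > 0" "r^2 = P^2 + 16 * q^2" unfolding r_def using pos by auto
    have "(P/r)^2 + (-4*q/r)^2 = (P^2 + 16*q^2)/r^2" by (simp add: power_divide add_divide_distrib power_mult_distrib)
    also have "\<dots> = 1" using r pos by simp
    finally have "(P/r)^2 + (-4*q/r)^2 = 1" .
    then obtain psi where psi: "P/r = cos psi" "-4*q/r = sin psi" using sincos_total_2pi by metis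
    define phi where "phi = psi / 4"
    have c4: "cos (4*phi) = P/r" and s4: "sin (4*phi) = -4*q/r" unfolding phi_def using psi by simp_all
    have "act4 (rotz phi) (red A e q u v) = red ((r - 3*e)/4) e 0 0 0"
    proof -
      have h1: "(cos (4*phi) * (4*A+3*e) - 4 * sin (4*phi) * q - 3*e)/4 = (r - 3*e)/4"
        unfolding c4 s4 P_def[symmetric] using r by (simp add: field_simps power2_eq_square)
      have h2: "(sin (4*phi) * (4*A+3*e) + 4 * cos (4*phi) * q)/4 = 0"
        unfolding c4 s4 P_def[symmetric] using r by (simp add: field_simps)
      show ?thesis unfolding ROT uv h1 h2 by simp
    qed
    moreover have "LHSP (red ((r - 3*e)/4) e 0 0 0)" by (rule case_D4) (use r in \<open>simp add: field_simps\<close>)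
    ultimately show ?thesis using LHSP_norm by metis
  qed
next
  case False
  hence P: "4*A + 3*e = 0" "q = 0" using h by auto
  define r where "r = sqrt (u^2 + v^2)"
  have pos: "u^2 + v^2 > 0" using False by (simp add: sum_power2_gt_zero_iff)
  have r: "r > 0" "r^2 = u^2 + v^2" unfolding r_def using pos by auto
  have "(v/r)^2 + (u/r)^2 = (u^2 + v^2)/r^2" by (simp add: power_divide add_divide_distrib)
  also have "\<dots> = r^2/r^2" using r by simp
  also have "\<dots> = 1" using r(1) by simp
  finally have "(v/r)^2 + (u/r)^2 = 1" .
  then obtain psi where psi: "v/r = cos psi" "u/r = sin psi" using sincos_total_2pi by metis
  define phi where "phi = psi / 3"
  have c3: "cos (3*phi) = v/r" and s3: "sin (3*phi) = u/r" unfolding phi_def using psi by simp_all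
  have "act4 (rotz phi) (red A e q u v) = red A e 0 0 r"
  proof -
    have h1: "cos (3*phi) * u - sin (3*phi) * v = 0" unfolding c3 s3 by (simp add: field_simps)
    have h2: "sin (3*phi) * u + cos (3*phi) * v = r" unfolding c3 s3 using r by (simp add: field_simps power2_eq_square)
    have h3: "(cos (4*phi) * (4*A+3*e) - 4 * sin (4*phi) * q - 3*e)/4 = A" using P by simp
    have h4: "(sin (4*phi) * (4*A+3*e) + 4 * cos (4*phi) * q)/4 = 0" using P by simp
    show ?thesis unfolding ROT h1 h2 h3 h4 ..
  qed
  moreover have "LHSP (red A e 0 0 r)" by (rule case_D3) (use r P in simp_all)
  ultimately show ?thesis using LHSP_norm by metis
qed



definition tr3 :: "mat3 \<Rightarrow> real" where "tr3 x = x$1$1 + x$2$2 + x$3$3"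

lemma tr3_conj:
  assumes g: "orthogonal_matrix g"
  shows "tr3 (cnj g k) = tr3 k"
proof -
  have "tr3 (cnj g k) = (\<Sum>i\<in>UNIV. \<Sum>p\<in>UNIV. \<Sum>q\<in>UNIV. (g$i$p * g$i$q) * k$p$q)"
    by (simp add: tr3_def matrix_matrix_mult_def transpose_def sum_3 algebra_simps)
  also have "\<dots> = (\<Sum>p\<in>UNIV. k$p$p)" by (rule contr_delta[OF g])
  also have "\<dots> = tr3 k" by (simp add: tr3_def sum_3)
  finally show ?thesis .
qed

lemma tr3_rotz: "tr3 (rotz th) = 1 + 2 * cos th"
  by (simp add: tr3_def rotz_def)

lemma tr3_fl: "tr3 (rotz th ** rotx_pi) = -1"
  by (simp add: tr3_def rotz_def rotx_pi_def matrix_matrix_mult_def sum_3)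

lemma O2_tr:
  assumes "x \<in> O2" "tr3 x \<noteq> -1"
  obtains th where "x = rotz th" "tr3 x = 1 + 2 * cos th"
  using assms unfolding O2_def by (auto simp: tr3_fl tr3_rotz)

lemma lc3: fixes a b c1 d1 c2 d2 c3 d3 ka kb kc :: real
  shows "a - b = ka * (c1 - d1) + kb * (c2 - d2) + kc * (c3 - d3) \<Longrightarrow> c1 = d1 \<Longrightarrow> c2 = d2 \<Longrightarrow> c3 = d3 \<Longrightarrow> a = b"
  by simp

lemma TI:
  fixes X :: tensor2
  assumes sym: "X 2 1 = X 1 2" "X 3 1 = X 1 3" "X 3 2 = X 2 3"
    and inv: "act2 (rotz th) X = X" and c: "cos th = 0 \<or> cos th = -1/2"
  shows "X 1 2 = 0 \<and> X 1 3 = 0 \<and> X 2 3 = 0 \<and> X 1 1 = X 2 2"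
proof -
  have e: "act2 (rotz th) X 1 1 = X 1 1" "act2 (rotz th) X 1 2 = X 1 2"
    "act2 (rotz th) X 1 3 = X 1 3" "act2 (rotz th) X 2 3 = X 2 3" using inv by simp_all
  define s where "s = sin th"
  define C where "C = cos th"
  have sc: "s^2 + C^2 = 1" unfolding s_def C_def by simp
  have E: "C * (C * X 1 1) - C * (s * X 1 2) - s * (C * X 1 2) + s * (s * X 2 2) = X 1 1"
    "C * (s * X 1 1) + C * (C * X 1 2) - s * (s * X 1 2) - s * (C * X 2 2) = X 1 2"
    "C * X 1 3 - s * X 2 3 = X 1 3"
    "s * X 1 3 + C * X 2 3 = X 2 3"
    using e sym unfolding s_def C_def by (simp_all add: act2_def sum_3 rotz_def algebra_simps)
  from c show ?thesis
  proof
    assume c0: "cos th = 0"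
    hence C0: "C = 0" unfolding C_def .
    have s2: "s^2 = 1" using sc C0 by simp
    have x: "X 1 3 = 0"
      by (rule lc3[where ka="-1/2" and kb="s/2" and kc="-(X 1 3)/2", OF _ E(3) E(4) s2]) (simp add: C0 field_simps power2_eq_square)
    have y: "X 2 3 = 0" using E(4) x C0 by simp
    have w: "X 1 2 = 0"
      by (rule lc3[where ka="-1/2" and kb="0" and kc="-(X 1 2)/2", OF _ E(2) E(2) s2]) (simp add: C0 field_simps power2_eq_square)
    have d: "X 1 1 = X 2 2"
      by (rule lc3[where ka="-1" and kb="0" and kc="X 2 2", OF _ E(1) E(1) s2]) (simp add: C0 field_simps power2_eq_square)
    show ?thesis using x y w d by blast
  next
    assume c0: "cos th = -1/2"
    hence C0: "C = -1/2" unfolding C_def .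
    have s2: "s^2 = 3/4" using sc C0 by (simp add: power2_eq_square)
    have x: "X 1 3 = 0"
      by (rule lc3[where ka="-1/2" and kb="s/3" and kc="-(X 1 3)/3", OF _ E(3) E(4) s2]) (simp add: C0 field_simps power2_eq_square)
    have y: "X 2 3 = 0" using E(4) x C0 by simp
    have w: "X 1 2 = 0"
      by (rule lc3[where ka="s/3" and kb="-1/2" and kc="-(5/6) * X 1 2 - (s/3) * X 2 2", OF _ E(1) E(2) s2]) (simp add: C0 field_simps power2_eq_square)
    have d: "X 1 1 = X 2 2"
      by (rule lc3[where ka="-4/3" and kb="4/3 * s" and kc="4/3 * X 2 2", OF _ E(1) w s2]) (simp add: C0 field_simps power2_eq_square)
    show ?thesis using x y w d by blast
  qed
qed

lemma csq: "cos th * (cos th * y) + sin th * (sin th * y) = (y::real)"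
  by (metis mult.assoc distrib_right mult_1 sin_cos_squared_add3)

lemma TI_O2:
  fixes X :: tensor2
  assumes "X 1 2 = 0" "X 1 3 = 0" "X 2 3 = 0" "X 2 1 = 0" "X 3 1 = 0" "X 3 2 = 0" "X 1 1 = X 2 2"
  shows "O2 \<subseteq> stab2 X"
proof -
  have r: "act2 (rotz th) X = X" for th
  proof -
    have "\<forall>i j. act2 (rotz th) X i j = X i j"
      unfolding forall_3 using assms
      by (simp add: act2_def sum_3 rotz_def algebra_simps csq)
    thus ?thesis by (simp add: fun_eq_iff)
  qed
  have x: "act2 rotx_pi X = X"
  proof -
    have "\<forall>i j. act2 rotx_pi X i j = X i j"
      unfolding forall_3 using assms by (simp add: act2_def sum_3 rotx_pi_def)
    thus ?thesis by (simp add: fun_eq_iff)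
  qed
  show ?thesis unfolding O2_def stab2_def
    using r x rotz_SO3 rotx_SO3 SO3_mult by (auto simp: act2_mult)
qed

lemma d2_sym:
  assumes "is_H4 H"
  shows "d2 H j i = d2 H i j"
proof -
  have s12: "\<And>i j k l. H i j k l = H j i k l" and s23: "\<And>i j k l. H i j k l = H i k j l"
    and s34: "\<And>i j k l. H i j k l = H i j l k" using assms unfolding is_H4_def by blast+
  have "\<forall>i j. d2 H j i = d2 H i j"
    unfolding forall_3 by (simp add: d2_def tr13_def ddot44_def sum_3 s12 s23 s34 algebra_simps)
  thus ?thesis by blast
qed

lemma ddot42_sym:
  assumes "is_H4 H"
  shows "ddot42 H t j i = ddot42 H t i j"
proof -
  have s12: "\<And>i j k l. H i j k l = H j i k l" using assms unfolding is_H4_def by blast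
  show ?thesis unfolding ddot42_def by (subst s12) (rule refl)
qed



lemma d2_red: "d2 (red A e q u v) 1 3 = (4*A+3*e)* u + 4*q* v"
  "d2 (red A e q u v) 2 3 = 4*q* u - (4*A+3*e)* v"
  by (simp_all add: d2_def tr13_def ddot44_def sum_3 red_def cnt_def algebra_simps)

lemma RED:
  assumes H: "is_H4 H"
    and tf: "t 1 2 = 0" "t 2 1 = 0" "t 1 3 = 0" "t 3 1 = 0" "t 2 3 = 0" "t 3 2 = 0" "t 2 2 = t 1 1" "t 1 1 \<noteq> t 3 3"
    and dd: "ddot42 H t 1 2 = 0" "ddot42 H t 1 3 = 0" "ddot42 H t 2 3 = 0" "ddot42 H t 1 1 = ddot42 H t 2 2"
    and d: "d2 H 1 3 = 0" "d2 H 2 3 = 0"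
  shows "H = red (H 1 1 1 1) (H 1 1 3 3) (H 1 1 1 2) (H 1 1 1 3) (H 1 1 2 3) \<and>
    ((H 1 1 1 3 = 0 \<and> H 1 1 2 3 = 0) \<or> (4 * H 1 1 1 1 + 3 * H 1 1 3 3 = 0 \<and> H 1 1 1 2 = 0))"
proof -
  have s12: "\<And>i j k l. H i j k l = H j i k l" and s23: "\<And>i j k l. H i j k l = H i k j l"
    and s34: "\<And>i j k l. H i j k l = H i j l k" and tr: "\<And>i j. (\<Sum>k\<in>UNIV. H k k i j) = 0"
    using H unfolding is_H4_def by blast+
  have tr': "H 1 1 1 1 + H 1 1 2 2 + H 1 1 3 3 = 0" "H 1 1 2 2 + H 2 2 2 2 + H 2 2 3 3 = 0"
    "H 1 1 3 3 + H 2 2 3 3 + H 3 3 3 3 = 0" "H 1 1 1 2 + H 1 2 2 2 + H 1 2 3 3 = 0"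
    "H 1 1 1 3 + H 1 2 2 3 + H 1 3 3 3 = 0" "H 1 1 2 3 + H 2 2 2 3 + H 2 3 3 3 = 0"
    using tr[of 1 1] tr[of 2 2] tr[of 3 3] tr[of 1 2] tr[of 1 3] tr[of 2 3]
    by (simp_all add: sum_3 s12 s23 s34 add_ac)
  define a where "a = t 1 1"
  define b where "b = t 3 3"
  have ab: "b - a \<noteq> 0" using tf(8) unfolding a_def b_def by simp
  have ddv: "H 1 1 1 2 * a + H 1 2 2 2 * a + H 1 2 3 3 * b = 0"
    "H 1 1 1 3 * a + H 1 2 2 3 * a + H 1 3 3 3 * b = 0"
    "H 1 1 2 3 * a + H 2 2 2 3 * a + H 2 3 3 3 * b = 0"
    "H 1 1 1 1 * a + H 1 1 2 2 * a + H 1 1 3 3 * b = H 1 1 2 2 * a + H 2 2 2 2 * a + H 2 2 3 3 * b"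
    using dd tf unfolding a_def b_def by (simp_all add: ddot42_def sum_3 s12 s23 s34)
  have z1: "H 1 2 3 3 = 0"
  proof -
    have "(b - a) * H 1 2 3 3 = (H 1 1 1 2 * a + H 1 2 2 2 * a + H 1 2 3 3 * b) - a * (H 1 1 1 2 + H 1 2 2 2 + H 1 2 3 3)"
      by (simp add: algebra_simps)
    also have "\<dots> = 0" using ddv(1) tr'(4) by simp
    finally show ?thesis using ab by simp
  qed
  have z2: "H 1 3 3 3 = 0"
  proof -
    have "(b - a) * H 1 3 3 3 = (H 1 1 1 3 * a + H 1 2 2 3 * a + H 1 3 3 3 * b) - a * (H 1 1 1 3 + H 1 2 2 3 + H 1 3 3 3)"
      by (simp add: algebra_simps)
    also have "\<dots> = 0" using ddv(2) tr'(5) by simp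
    finally show ?thesis using ab by simp
  qed
  have z3: "H 2 3 3 3 = 0"
  proof -
    have "(b - a) * H 2 3 3 3 = (H 1 1 2 3 * a + H 2 2 2 3 * a + H 2 3 3 3 * b) - a * (H 1 1 2 3 + H 2 2 2 3 + H 2 3 3 3)"
      by (simp add: algebra_simps)
    also have "\<dots> = 0" using ddv(3) tr'(6) by simp
    finally show ?thesis using ab by simp
  qed
  have z4: "H 2 2 3 3 = H 1 1 3 3"
  proof -
    have "(b - a) * (H 1 1 3 3 - H 2 2 3 3) = (H 1 1 1 1 * a + H 1 1 2 2 * a + H 1 1 3 3 * b) - (H 1 1 2 2 * a + H 2 2 2 2 * a + H 2 2 3 3 * b)
       - a * (H 1 1 1 1 + H 1 1 2 2 + H 1 1 3 3) + a * (H 1 1 2 2 + H 2 2 2 2 + H 2 2 3 3)"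
      by (simp add: algebra_simps)
    also have "\<dots> = 0" using ddv(4) tr'(1,2) by simp
    finally show ?thesis using ab by simp
  qed
  define A where "A = H 1 1 1 1"
  define e where "e = H 1 1 3 3"
  define q where "q = H 1 1 1 2"
  define u where "u = H 1 1 1 3"
  define v where "v = H 1 1 2 3"
  have Hr: "H = red A e q u v"
    apply (rule sym_eq[OF H red_H4])
    using tr' z1 z2 z3 z4 unfolding A_def e_def q_def u_def v_def
    by (simp_all add: red_def cnt_def s12 s23 s34)
  have X: "(4*A+3*e)* u + 4*q* v = 0" "4*q* u - (4*A+3*e)* v = 0"
    using d unfolding Hr d2_red by simp_all
  define P where "P = 4*A+3*e"
  have X': "P* u + 4*q* v = 0" "4*q* u - P* v = 0" using X unfolding P_def by simp_all
  have U: "(P^2 + 16*q^2) * u = 0"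
  proof -
    have "(P^2 + 16*q^2) * u = P * (P* u + 4*q* v) + 4*q*(4*q* u - P* v)" by (simp add: algebra_simps power2_eq_square)
    thus ?thesis using X' by simp
  qed
  have V: "(P^2 + 16*q^2) * v = 0"
  proof -
    have "(P^2 + 16*q^2) * v = 4*q * (P* u + 4*q* v) - P*(4*q* u - P* v)" by (simp add: algebra_simps power2_eq_square)
    thus ?thesis using X' by simp
  qed
  have "(u = 0 \<and> v = 0) \<or> (P = 0 \<and> q = 0)"
  proof (cases "P^2 + 16*q^2 = 0")
    case True
    have "P^2 \<ge> 0" "q^2 \<ge> 0" by auto
    hence "P^2 = 0" "q^2 = 0" using True by linarith+
    thus ?thesis by simp
  next
    case False thus ?thesis using U V by simp
  qed
  thus ?thesis using Hr unfolding A_def e_def q_def u_def v_def P_def by blast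
qed



definition Rx :: mat3 where
  "Rx = vector [vector [1, 0, 0], vector [0, 0, -1], vector [0, 1, 0]]"

lemma Rx_SO3: "Rx \<in> SO3"
proof -
  have "orthogonal_matrix Rx"
    unfolding orthogonal_matrix_def
    by (simp add: matrix_matrix_mult_def transpose_def mat_def vec_eq_iff forall_3 sum_3 Rx_def)
  moreover have "det Rx = 1" by (simp add: det_3 Rx_def)
  ultimately show ?thesis by (simp add: SO3_def)
qed

lemma Rx_notO2: "Rx \<notin> O2"
proof
  assume "Rx \<in> O2"
  then consider th where "Rx = rotz th" | th where "Rx = rotz th ** rotx_pi" unfolding O2_def by blast
  thus False
  proof cases
    case 1 hence "Rx $ 3 $ 3 = rotz th $ 3 $ 3" by simp
    thus False by (simp add: Rx_def rotz_def)
  next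
    case 2 hence "Rx $ 3 $ 3 = (rotz th ** rotx_pi) $ 3 $ 3" by simp
    thus False by (simp add: Rx_def rotz_def rotx_pi_def matrix_matrix_mult_def sum_3)
  qed
qed

lemma rotz_O2: "rotz th \<in> O2" unfolding O2_def by blast
lemma rotx_O2: "rotx_pi \<in> O2"
proof -
  have "rotx_pi = rotz 0 ** rotx_pi" by (simp add: rotz_0)
  thus ?thesis unfolding O2_def by blast
qed

lemma tform:
  assumes "stab2 t = O2"
  shows "t 1 2 = 0 \<and> t 2 1 = 0 \<and> t 1 3 = 0 \<and> t 3 1 = 0 \<and> t 2 3 = 0 \<and> t 3 2 = 0 \<and> t 2 2 = t 1 1 \<and> t 1 1 \<noteq> t 3 3"
proof -
  have r: "act2 (rotz (pi/2)) t = t" using assms rotz_O2[of "pi/2"] unfolding stab2_def by blast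
  have x: "act2 rotx_pi t = t" using assms rotx_O2 unfolding stab2_def by blast
  have xe: "act2 rotx_pi t 1 2 = t 1 2" "act2 rotx_pi t 2 1 = t 2 1" "act2 rotx_pi t 1 3 = t 1 3"
    "act2 rotx_pi t 3 1 = t 3 1" using x by simp_all
  have re: "act2 (rotz (pi/2)) t 1 1 = t 1 1" "act2 (rotz (pi/2)) t 2 3 = t 2 3"
    "act2 (rotz (pi/2)) t 3 2 = t 3 2" using r by simp_all
  have z: "t 1 2 = 0" "t 2 1 = 0" "t 1 3 = 0" "t 3 1 = 0"
    using xe by (simp_all add: act2_def sum_3 rotx_pi_def)
  have w: "t 2 2 = t 1 1" "t 2 3 = 0" "t 3 2 = 0"
    using re z by (simp_all add: act2_def sum_3 rotz_def)
  have ne: "t 1 1 \<noteq> t 3 3"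
  proof
    assume eq: "t 1 1 = t 3 3"
    have "\<forall>i j. act2 Rx t i j = t i j"
      unfolding forall_3 using z w eq by (simp add: act2_def sum_3 Rx_def)
    hence "act2 Rx t = t" by (simp add: fun_eq_iff)
    hence "Rx \<in> stab2 t" using Rx_SO3 unfolding stab2_def by blast
    thus False using assms Rx_notO2 by simp
  qed
  show ?thesis using z w ne by blast
qed

lemma fix_TI:
  assumes H: "is_H4 H" and t: "stab2 t = O2" and R: "rotz th \<in> stab4 H" and c: "cos th = 0 \<or> cos th = -1/2"
  shows "in_class (stab2 (d2 H) \<inter> O2 \<inter> stab2 (ddot42 H t)) O2"
proof -
  have o: "orthogonal_matrix (rotz th)" by (rule SO3_orth[OF rotz_SO3])
  have h: "act4 (rotz th) H = H" using R by (simp add: stab4_def)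
  have tt: "act2 (rotz th) t = t" using t rotz_O2[of th] by (auto simp: stab2_def)
  have d: "act2 (rotz th) (d2 H) = d2 H" using d2_equiv[OF o, of H] h by simp
  have dd: "act2 (rotz th) (ddot42 H t) = ddot42 H t" using ddot42_equiv[OF o, of H t] h tt by simp
  have T1: "d2 H 1 2 = 0 \<and> d2 H 1 3 = 0 \<and> d2 H 2 3 = 0 \<and> d2 H 1 1 = d2 H 2 2"
    by (rule TI[OF d2_sym[OF H] d2_sym[OF H] d2_sym[OF H] d c])
  have T2: "ddot42 H t 1 2 = 0 \<and> ddot42 H t 1 3 = 0 \<and> ddot42 H t 2 3 = 0 \<and> ddot42 H t 1 1 = ddot42 H t 2 2"
    by (rule TI[OF ddot42_sym[OF H] ddot42_sym[OF H] ddot42_sym[OF H] dd c])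
  have "O2 \<subseteq> stab2 (d2 H)"
    by (rule TI_O2) (use T1 d2_sym[OF H, of 1 2] d2_sym[OF H, of 1 3] d2_sym[OF H, of 2 3] in auto)
  moreover have "O2 \<subseteq> stab2 (ddot42 H t)"
    by (rule TI_O2) (use T2 ddot42_sym[OF H, of t 1 2] ddot42_sym[OF H, of t 1 3] ddot42_sym[OF H, of t 2 3] in auto)
  ultimately have "stab2 (d2 H) \<inter> O2 \<inter> stab2 (ddot42 H t) = O2" by blast
  thus ?thesis by (simp add: in_class_refl)
qed

lemma class_rot:
  assumes "in_class G K" "rotz th0 \<in> K" "G \<subseteq> O2" "cos th0 = 0 \<or> cos th0 = -1/2"
  obtains th where "rotz th \<in> G" "cos th = cos th0"
proof -
  obtain g where g: "g \<in> SO3" "G = cnj g ` K" using assms(1) unfolding in_class_def by blast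
  define R where "R = cnj g (rotz th0)"
  have RG: "R \<in> G" unfolding R_def using g assms(2) by blast
  have tr: "tr3 R = 1 + 2 * cos th0" unfolding R_def using tr3_conj[OF SO3_orth[OF g(1)]] tr3_rotz by simp
  have "tr3 R \<noteq> -1" using tr assms(4) by auto
  then obtain th where th: "R = rotz th" "tr3 R = 1 + 2 * cos th" using O2_tr RG assms(3) by blast
  have "cos th = cos th0" using th(2) tr by simp
  thus ?thesis using that RG th(1) by blast
qed

lemma frame:
  assumes H: "is_H4 H" and t: "stab2 t = O2"
  shows "(in_class (stab4 H \<inter> O2) (Dn 3) \<or> in_class (stab4 H \<inter> O2) (Dn 4) \<or> in_class (stab4 H \<inter> O2) O2)
     \<longleftrightarrow> in_class (stab2 (d2 H) \<inter> O2 \<inter> stab2 (ddot42 H t)) O2"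
proof
  assume L: "in_class (stab4 H \<inter> O2) (Dn 3) \<or> in_class (stab4 H \<inter> O2) (Dn 4) \<or> in_class (stab4 H \<inter> O2) O2"
  have gen: "in_class (stab2 (d2 H) \<inter> O2 \<inter> stab2 (ddot42 H t)) O2"
    if a1: "in_class (stab4 H \<inter> O2) K" and a2: "rotz th0 \<in> K" and a3: "cos th0 = 0 \<or> cos th0 = -1/2" for K th0
  proof -
    obtain th where "rotz th \<in> stab4 H \<inter> O2" "cos th = cos th0"
      using class_rot[OF a1 a2 _ a3] by blast
    thus ?thesis using fix_TI[OF H t] a3 by auto
  qed
  have c3: "cos (2*pi/3) = -1/2" by (rule cos_120)
  have d3: "rotz (2*pi/3) \<in> Dn 3"
  proof -
    have "cos (3 * (2*pi/3)) = (1::real)" by simp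
    thus ?thesis unfolding Dn_char[of 3, simplified] by blast
  qed
  have d4: "rotz (pi/2) \<in> Dn 4"
  proof -
    have "4 * (pi/2) = 2 * pi" by simp
    hence "cos (4 * (pi/2)) = (1::real)" by simp
    thus ?thesis unfolding Dn_char[of 4, simplified] by blast
  qed
  from L show "in_class (stab2 (d2 H) \<inter> O2 \<inter> stab2 (ddot42 H t)) O2"
  proof (elim disjE)
    assume "in_class (stab4 H \<inter> O2) (Dn 3)" thus ?thesis using gen d3 c3 by blast
  next
    assume "in_class (stab4 H \<inter> O2) (Dn 4)" thus ?thesis using gen d4 by simp
  next
    assume "in_class (stab4 H \<inter> O2) O2" thus ?thesis using gen rotz_O2[of "pi/2"] by simp
  qed
next
  assume R: "in_class (stab2 (d2 H) \<inter> O2 \<inter> stab2 (ddot42 H t)) O2"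
  obtain th where th: "rotz th \<in> stab2 (d2 H) \<inter> O2 \<inter> stab2 (ddot42 H t)" "cos th = cos (pi/2)"
    using class_rot[OF R rotz_O2[of "pi/2"]] by auto
  have c: "cos th = 0 \<or> cos th = -1/2" using th(2) by simp
  have d: "act2 (rotz th) (d2 H) = d2 H" and dd: "act2 (rotz th) (ddot42 H t) = ddot42 H t"
    using th(1) by (auto simp: stab2_def)
  have T1: "d2 H 1 2 = 0 \<and> d2 H 1 3 = 0 \<and> d2 H 2 3 = 0 \<and> d2 H 1 1 = d2 H 2 2"
    by (rule TI[OF d2_sym[OF H] d2_sym[OF H] d2_sym[OF H] d c])
  have T2: "ddot42 H t 1 2 = 0 \<and> ddot42 H t 1 3 = 0 \<and> ddot42 H t 2 3 = 0 \<and> ddot42 H t 1 1 = ddot42 H t 2 2"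
    by (rule TI[OF ddot42_sym[OF H] ddot42_sym[OF H] ddot42_sym[OF H] dd c])
  have tf: "t 1 2 = 0 \<and> t 2 1 = 0 \<and> t 1 3 = 0 \<and> t 3 1 = 0 \<and> t 2 3 = 0 \<and> t 3 2 = 0 \<and> t 2 2 = t 1 1 \<and> t 1 1 \<noteq> t 3 3"
    by (rule tform[OF t])
  have "H = red (H 1 1 1 1) (H 1 1 3 3) (H 1 1 1 2) (H 1 1 1 3) (H 1 1 2 3) \<and>
    ((H 1 1 1 3 = 0 \<and> H 1 1 2 3 = 0) \<or> (4 * H 1 1 1 1 + 3 * H 1 1 3 3 = 0 \<and> H 1 1 1 2 = 0))"
    by (rule RED[OF H, where t=t]) (use tf T1 T2 in auto)
  hence "LHSP H" using LHS_red by metis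
  thus "in_class (stab4 H \<inter> O2) (Dn 3) \<or> in_class (stab4 H \<inter> O2) (Dn 4) \<or> in_class (stab4 H \<inter> O2) O2"
    unfolding LHSP_def .
qed



theorem corollary9p9:
  fixes t :: tensor2 and H :: tensor4
  assumes "is_Sym2 t" and "in_class (stab2 t) O2" and "is_H4 H"
  shows "(in_class (stab4 H \<inter> stab2 t) (Dn 3) \<or> in_class (stab4 H \<inter> stab2 t) (Dn 4)
           \<or> in_class (stab4 H \<inter> stab2 t) O2)
         \<longleftrightarrow> in_class (stab2 (d2 H) \<inter> stab2 t \<inter> stab2 (ddot42 H t)) O2"
proof -
  obtain g where g: "g \<in> SO3" and tg: "stab2 t = cnj g ` O2"
    using assms(2) unfolding in_class_def by blast
  have go: "orthogonal_matrix g" by (rule SO3_orth[OF g])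
  define t' where "t' = act2 (transpose g) t"
  define H' where "H' = act4 (transpose g) H"
  have tt: "t = act2 g t'" unfolding t'_def
    by (simp only: act2_mult[symmetric] orth_TR[OF go] act2_id)
  have HH: "H = act4 g H'" unfolding H'_def
    by (simp only: act4_mult[symmetric] orth_TR[OF go] act4_id)
  have inj: "inj (cnj g)" by (rule inj_conj[OF g])
  have "cnj g ` stab2 t' = cnj g ` O2" using tg stab2_conj[OF g, of t'] tt by simp
  hence t': "stab2 t' = O2" using inj by (simp add: inj_image_eq_iff)
  have H': "is_H4 H'" unfolding H'_def using assms(3) go by (simp add: H4_equiv)
  have e1: "stab4 H \<inter> stab2 t = cnj g ` (stab4 H' \<inter> O2)"
    using tg stab4_conj[OF g, of H'] HH inj by (simp add: image_Int)
  have d2e: "d2 H = act2 g (d2 H')" using HH d2_equiv[OF go] by simp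
  have dde: "ddot42 H t = act2 g (ddot42 H' t')" using HH tt ddot42_equiv[OF go] by simp
  have e2: "stab2 (d2 H) \<inter> stab2 t \<inter> stab2 (ddot42 H t) = cnj g ` (stab2 (d2 H') \<inter> O2 \<inter> stab2 (ddot42 H' t'))"
    using tg inj by (simp add: d2e dde stab2_conj[OF g] image_Int)
  show ?thesis unfolding e1 e2 in_class_conj[OF g] by (rule frame[OF H' t'])
qed


end
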